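(* For every integer $n\ge4$, $\mathcal D(n)>\mathcal P(n)$, where $\mathcal D(n)=2^4\cdot3^{(n-4)/2}$ for $n$ even, $\mathcal D(n)=2^5\cdot3^{(n-5)/2}$ for $n$ odd, and $\mathcal P(n)$ is the number of unordered pairs $\{\xi,\eta\}$ of partitions with $|\xi|+|\eta|=n$, where each pair with $\xi=\eta$ is counted twice (i.e. $\mathcal P(n)$ is the number of irreducible complex representations of the Weyl group of type $D_n$). *)

theory Defs
  imports Main "HOL-Library.Multiset"
begin

definition is_partition :: "nat multiset \<Rightarrow> nat \<Rightarrow> bool" where
  "is_partition \<xi> k \<longleftrightarrow> (\<forall>x\<in>#\<xi>. 0 < x) \<and> sum_mset \<xi> = k"

definition partitions_of :: "nat \<Rightarrow> nat multiset set" where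
  "partitions_of k = {\<xi>. is_partition \<xi> k}"

text \<open>Unordered pairs are represented as
  sets {xi, eta} (a singleton when xi = eta); the second summand counts the
  diagonal pairs a second time.\<close>
definition Pcount :: "nat \<Rightarrow> nat" where
  "Pcount n = card {{\<xi>, \<eta>} | \<xi> \<eta>. \<exists>a b. a + b = n \<and> is_partition \<xi> a \<and> is_partition \<eta> b}
            + card {\<xi>. \<exists>a. a + a = n \<and> is_partition \<xi> a}"

definition Dbound :: "nat \<Rightarrow> nat" where
  "Dbound n = (if even n then 2^4 * 3^((n - 4) div 2) else 2^5 * 3^((n - 5) div 2))"

end

theory Submission imports Defs "HOL-Library.Multiset_Order" begin

fun P :: "nat \<Rightarrow> nat \<Rightarrow> nat" where
  "P k 0 = (if k = 0 then 1 else 0)"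
| "P k (Suc m) = P k m + (if Suc m \<le> k then P (k - Suc m) (Suc m) else 0)"

declare P.simps(2)[simp del]

lemma P_Suc_le: "Suc m \<le> k \<Longrightarrow> P k (Suc m) = P k m + P (k - Suc m) (Suc m)"
  by (subst P.simps(2)) simp

lemma P_Suc_gt: "\<not> Suc m \<le> k \<Longrightarrow> P k (Suc m) = P k m"
  by (subst P.simps(2)) simp

lemma P_0k[simp]: "P 0 m = 1"
  by (induction m) (auto simp: P_Suc_gt)

lemma P_1k: "1 \<le> m \<Longrightarrow> P 1 m = 1"
proof (induction m)
  case 0 then show ?case by simp
next
  case (Suc m) then show ?case by (cases m) (auto simp: P_Suc_gt P_Suc_le)
qed

lemma P_k1: "P k 1 = 1"
proof (induction k rule: less_induct)
  case (less k)
  show ?case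
  proof (cases k)
    case 0 then show ?thesis by (simp add: P_Suc_gt)
  next
    case (Suc j)
    then have "P k 1 = P k 0 + P (k - 1) 1" using P_Suc_le[of 0 k] by simp
    then show ?thesis using less.IH[of "k-1"] Suc by simp
  qed
qed

lemma P_mono_Suc_m: "P k m \<le> P k (Suc m)"
  by (cases "Suc m \<le> k") (simp_all add: P_Suc_le P_Suc_gt)

lemma P_mono_m: "m \<le> m' \<Longrightarrow> P k m \<le> P k m'"
  by (induction m' rule: dec_induct) (auto intro: le_trans P_mono_Suc_m)

lemma P_stab: "k \<le> m \<Longrightarrow> P k m = P k k"
  by (induction m rule: dec_induct) (auto simp: P_Suc_gt)

lemma P_mono_k: "1 \<le> m \<Longrightarrow> P k m \<le> P (Suc k) m"
proof (induction m arbitrary: k rule: dec_induct)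
  case base then show ?case using P_k1[of k] P_k1[of "Suc k"] by simp
next
  case (step m)
  show ?case
  proof (induction k rule: less_induct)
    case (less k)
    have a: "P k m \<le> P (Suc k) m" using step.IH by blast
    show ?case
    proof (cases "Suc m \<le> k")
      case True
      have "P (k - Suc m) (Suc m) \<le> P (Suc (k - Suc m)) (Suc m)"
        using less True by simp
      moreover have "Suc (k - Suc m) = Suc k - Suc m" using True by simp
      ultimately show ?thesis using a True by (simp add: P_Suc_le)
    next
      case False
      have "P (Suc k) m \<le> P (Suc k) (Suc m)" by (rule P_mono_Suc_m)
      then show ?thesis using a False by (simp add: P_Suc_gt)
    qed
  qed
qed

lemma P_main: "2 \<le> k \<Longrightarrow> P k m + (if 0 < m \<and> m < k then 1 else 0) \<le> P (k-1) m + P (k-2) m"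
proof (induction m arbitrary: k)
  case 0 then show ?case by simp
next
  case (Suc m)
  show ?case using Suc.prems
  proof (induction k rule: less_induct)
    case (less k)
    note IHm = Suc.IH[OF less.prems]
    have mo: "P (k-1) m \<le> P (k-1) (Suc m)" "P (k-2) m \<le> P (k-2) (Suc m)"
      by (simp_all add: P_mono_Suc_m)
    show ?case
    proof (cases "Suc m \<le> k")
      case False
      then have "P k (Suc m) = P k m" by (simp add: P_Suc_gt)
      then show ?thesis using IHm False mo by simp
    next
      case True
      show ?thesis
      proof (cases "Suc m = k")
        case True
        have "0 < m" using True less.prems by simp
        then have "P k m + 1 \<le> P (k-1) m + P (k-2) m" using IHm True by simp
        moreover have "P k (Suc m) = P k m + P (k - Suc m) (Suc m)" using \<open>Suc m \<le> k\<close> by (simp add: P_Suc_le)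
        moreover have "k - Suc m = 0" using True by simp
        moreover have "\<not> (Suc m < k)" using True by simp
        ultimately show ?thesis using mo by (simp only:) simp
      next
        case False
        with True have lt: "Suc m < k" by simp
        show ?thesis
        proof (cases "k - Suc m = 1")
          case True
          have e1: "P (k-1) (Suc m) = P (k-1) m + 1"
            using True lt P_Suc_le[of m "k-1"] by (simp add: diff_commute)
          have e2: "P (k-2) (Suc m) = P (k-2) m" using True lt P_Suc_gt[of m "k-2"] by simp
          have q1: "P 1 (Suc m) = 1" by (rule P_1k) simp
          have q2: "P k (Suc m) = P k m + P (k - Suc m) (Suc m)" using lt by (simp add: P_Suc_le)
          have e3: "P k (Suc m) = P k m + 1" using q1 q2 True by (simp only:)
          have "P k m + 1 \<le> P (k-1) m + P (k-2) m"
          proof (cases m)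
            case 0 then show ?thesis using True by simp
          next
            case (Suc m') then show ?thesis using IHm True lt by simp
          qed
          then show ?thesis using e1 e2 e3 lt by simp
        next
          case False
          then have ge: "2 \<le> k - Suc m" using lt by simp
          have IHk: "P (k - Suc m) (Suc m) + (if 0 < Suc m \<and> Suc m < k - Suc m then 1 else 0)
               \<le> P (k - Suc m - 1) (Suc m) + P (k - Suc m - 2) (Suc m)"
            using less.IH[of "k - Suc m"] ge lt by simp
          have e1: "P (k-1) (Suc m) = P (k-1) m + P (k - Suc m - 1) (Suc m)"
            using ge P_Suc_le[of m "k-1"] by (simp add: diff_commute)
          have e2: "P (k-2) (Suc m) = P (k-2) m + P (k - Suc m - 2) (Suc m)"
            using ge P_Suc_le[of m "k-2"] by (simp add: diff_commute)
          have e3: "P k (Suc m) = P k m + P (k - Suc m) (Suc m)" using lt by (simp add: P_Suc_le)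
          have "P k m + P (k - Suc m) (Suc m) + 1 \<le> P (k-1) m + P (k-2) m + P (k - Suc m - 1) (Suc m) + P (k - Suc m - 2) (Suc m)"
          proof (cases m)
            case 0 then show ?thesis using IHk IHm ge by simp
          next
            case (Suc m') then show ?thesis using IHk IHm lt by simp
          qed
          then show ?thesis using e1 e2 e3 lt by simp
        qed
      qed
    qed
  qed
qed

definition pp :: "nat \<Rightarrow> nat" where "pp k = P k k"

lemma pp_rec: "2 \<le> k \<Longrightarrow> pp k \<le> pp (k-1) + pp (k-2)"
proof -
  assume k: "2 \<le> k"
  have "P k k \<le> P (k-1) k + P (k-2) k" by (rule le_trans[OF le_add1 P_main[OF k]])
  moreover have "P (k-1) k = P (k-1) (k-1)" "P (k-2) k = P (k-2) (k-2)" by (rule P_stab; simp)+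
  ultimately show ?thesis by (simp add: pp_def)
qed

lemma pp_mono_Suc: "pp k \<le> pp (Suc k)"
proof (cases k)
  case 0 then show ?thesis by (simp add: pp_def P_Suc_le)
next
  case (Suc j)
  have "P k k \<le> P (Suc k) k" using P_mono_k[of k k] Suc by simp
  also have "\<dots> \<le> P (Suc k) (Suc k)" by (rule P_mono_Suc_m)
  finally show ?thesis by (simp add: pp_def)
qed

lemma pp_mono: "a \<le> b \<Longrightarrow> pp a \<le> pp b"
  by (induction b rule: dec_induct) (auto intro: le_trans pp_mono_Suc)


definition Am :: "nat \<Rightarrow> nat \<Rightarrow> nat multiset set" where
  "Am k m = {\<xi>. is_partition \<xi> k \<and> (\<forall>x\<in>#\<xi>. x \<le> m)}"

lemma Am_0: "Am k 0 = (if k = 0 then {{#}} else {})"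
proof -
  have "\<xi> \<in> Am k 0 \<longleftrightarrow> k = 0 \<and> \<xi> = {#}" for \<xi>
  proof
    assume "\<xi> \<in> Am k 0"
    then have "\<forall>x\<in>#\<xi>. False" "sum_mset \<xi> = k" unfolding Am_def is_partition_def by fastforce+
    then show "k = 0 \<and> \<xi> = {#}" by (metis multiset_nonemptyE sum_mset.empty)
  next
    assume "k = 0 \<and> \<xi> = {#}" then show "\<xi> \<in> Am k 0" by (simp add: Am_def is_partition_def)
  qed
  then show ?thesis by auto
qed

lemma Am_Suc: "Am k (Suc m) = Am k m \<union> (if Suc m \<le> k then add_mset (Suc m) ` Am (k - Suc m) (Suc m) else {})"
proof (intro equalityI subsetI)
  fix \<xi> assume a: "\<xi> \<in> Am k (Suc m)"
  show "\<xi> \<in> Am k m \<union> (if Suc m \<le> k then add_mset (Suc m) ` Am (k - Suc m) (Suc m) else {})"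
  proof (cases "Suc m \<in># \<xi>")
    case True
    define \<zeta> where "\<zeta> = \<xi> - {#Suc m#}"
    have e: "\<xi> = add_mset (Suc m) \<zeta>" using True by (simp add: \<zeta>_def)
    have s: "sum_mset \<xi> = k" "\<forall>x\<in>#\<xi>. 0 < x \<and> x \<le> Suc m" using a by (auto simp: Am_def is_partition_def)
    then have "Suc m + sum_mset \<zeta> = k" using e by simp
    then have "Suc m \<le> k" "sum_mset \<zeta> = k - Suc m" by auto
    moreover have "\<forall>x\<in>#\<zeta>. 0 < x \<and> x \<le> Suc m" using s e by simp
    ultimately have "\<zeta> \<in> Am (k - Suc m) (Suc m)" "Suc m \<le> k" by (auto simp: Am_def is_partition_def)
    then show ?thesis using e by auto
  next
    case False
    then have "\<xi> \<in> Am k m" using a unfolding Am_def by (auto simp: le_Suc_eq)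
    then show ?thesis by simp
  qed
next
  fix \<xi> assume "\<xi> \<in> Am k m \<union> (if Suc m \<le> k then add_mset (Suc m) ` Am (k - Suc m) (Suc m) else {})"
  then show "\<xi> \<in> Am k (Suc m)"
    by (auto simp: Am_def is_partition_def split: if_splits)
qed

lemma Am_card: "finite (Am k m) \<and> card (Am k m) = P k m"
proof (induction k m rule: P.induct)
  case (1 k) then show ?case by (simp add: Am_0)
next
  case (2 k m)
  show ?case
  proof (cases "Suc m \<le> k")
    case False then show ?thesis using 2 Am_Suc[of k m] by (simp add: P_Suc_gt)
  next
    case True
    have fin: "finite (Am (k - Suc m) (Suc m))" and c: "card (Am (k - Suc m) (Suc m)) = P (k - Suc m) (Suc m)"
      using 2(2) True by auto
    have disj: "Am k m \<inter> add_mset (Suc m) ` Am (k - Suc m) (Suc m) = {}"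
      by (auto simp: Am_def)
    have "card (add_mset (Suc m) ` Am (k - Suc m) (Suc m)) = card (Am (k - Suc m) (Suc m))"
      by (rule card_image) (simp add: inj_on_def)
    moreover have "Am k (Suc m) = Am k m \<union> add_mset (Suc m) ` Am (k - Suc m) (Suc m)"
      using Am_Suc[of k m] True by simp
    ultimately show ?thesis using 2(1) fin c disj True
      by (simp add: card_Un_disjoint P_Suc_le)
  qed
qed

lemma mem_le_sum: "x \<in># \<xi> \<Longrightarrow> x \<le> sum_mset (\<xi>::nat multiset)"
  by (induction \<xi>) auto

lemma partitions_Am: "partitions_of k = Am k k"
  unfolding partitions_of_def Am_def is_partition_def using mem_le_sum by auto

lemma partitions_fin: "finite (partitions_of k)"
  using Am_card partitions_Am by simp

lemma partitions_card: "card (partitions_of k) = pp k"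
  using Am_card partitions_Am pp_def by simp

definition B :: "nat \<Rightarrow> nat" where "B n = (\<Sum>a\<le>n. pp a * pp (n - a))"
definition dd :: "nat \<Rightarrow> nat" where "dd n = (if even n then pp (n div 2) else 0)"

definition S :: "nat \<Rightarrow> (nat multiset \<times> nat multiset) set" where
  "S n = {(\<xi>,\<eta>). \<exists>a b. a + b = n \<and> is_partition \<xi> a \<and> is_partition \<eta> b}"

lemma S_UN: "S n = (\<Union>a\<in>{..n}. partitions_of a \<times> partitions_of (n - a))"
proof (intro equalityI subsetI)
  fix p assume "p \<in> S n"
  then obtain \<xi> \<eta> a b where "p = (\<xi>,\<eta>)" "a + b = n" "is_partition \<xi> a" "is_partition \<eta> b"
    unfolding S_def by blast
  then show "p \<in> (\<Union>a\<in>{..n}. partitions_of a \<times> partitions_of (n - a))"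
    unfolding partitions_of_def by (intro UN_I[of a]) auto
next
  fix p assume "p \<in> (\<Union>a\<in>{..n}. partitions_of a \<times> partitions_of (n - a))"
  then obtain a where "a \<le> n" "p \<in> partitions_of a \<times> partitions_of (n - a)" by auto
  moreover obtain \<xi> \<eta> where pe: "p = (\<xi>,\<eta>)" by (cases p)
  ultimately have h: "a + (n - a) = n \<and> is_partition \<xi> a \<and> is_partition \<eta> (n - a)"
    unfolding partitions_of_def by auto
  have "\<exists>a b. a + b = n \<and> is_partition \<xi> a \<and> is_partition \<eta> b"
    by (rule exI[of _ a], rule exI[of _ "n - a"]) (rule h)
  then show "p \<in> S n" unfolding S_def pe by simp
qed

lemma S_fin: "finite (S n)"
  unfolding S_UN using partitions_fin by auto

lemma S_card: "card (S n) = B n"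
proof -
  have "card (S n) = (\<Sum>a\<le>n. card (partitions_of a \<times> partitions_of (n - a)))"
    unfolding S_UN
    by (rule card_UN_disjoint) (simp, simp add: partitions_fin, auto simp: partitions_of_def is_partition_def)
  then show ?thesis by (simp add: B_def card_cartesian_product partitions_card)
qed

definition Dg :: "nat \<Rightarrow> nat multiset set" where
  "Dg n = {\<xi>. \<exists>a. a + a = n \<and> is_partition \<xi> a}"

lemma Dg_eq: "Dg n = (if even n then partitions_of (n div 2) else {})"
proof (cases "even n")
  case True
  then obtain b where b: "n = 2 * b" by (auto elim: evenE)
  have "\<xi> \<in> Dg n \<longleftrightarrow> is_partition \<xi> b" for \<xi>
  proof
    assume "\<xi> \<in> Dg n"
    then obtain a where "a + a = n" "is_partition \<xi> a" unfolding Dg_def by blast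
    moreover then have "a = b" using b by simp
    ultimately show "is_partition \<xi> b" by simp
  next
    assume "is_partition \<xi> b" then show "\<xi> \<in> Dg n" unfolding Dg_def using b by (auto intro!: exI[of _ b])
  qed
  then show ?thesis using True b unfolding partitions_of_def by auto
next
  case False
  then show ?thesis unfolding Dg_def by auto
qed

lemma Dg_card: "card (Dg n) = dd n" "finite (Dg n)"
  by (auto simp: Dg_eq dd_def partitions_card partitions_fin)

definition U :: "nat \<Rightarrow> nat multiset set set" where
  "U n = {{\<xi>, \<eta>} | \<xi> \<eta>. \<exists>a b. a + b = n \<and> is_partition \<xi> a \<and> is_partition \<eta> b}"

lemma Pcount_eq: "Pcount n = card (U n) + card (Dg n)"
  unfolding Pcount_def U_def Dg_def by simp

lemma S_swap: "(\<xi>,\<eta>) \<in> S n \<Longrightarrow> (\<eta>,\<xi>) \<in> S n"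
proof -
  assume "(\<xi>,\<eta>) \<in> S n"
  then obtain a b where "a + b = n" "is_partition \<xi> a" "is_partition \<eta> b" unfolding S_def by blast
  then have "b + a = n \<and> is_partition \<eta> b \<and> is_partition \<xi> a" by simp
  then show ?thesis unfolding S_def by blast
qed

lemma U_eq: "U n = (\<lambda>(\<xi>,\<eta>). {\<xi>,\<eta>}) ` {p \<in> S n. fst p \<le> snd p}"
proof (intro equalityI subsetI)
  fix u assume "u \<in> U n"
  then obtain \<xi> \<eta> where u: "u = {\<xi>,\<eta>}" and m: "(\<xi>,\<eta>) \<in> S n" unfolding U_def S_def by blast
  show "u \<in> (\<lambda>(\<xi>,\<eta>). {\<xi>,\<eta>}) ` {p \<in> S n. fst p \<le> snd p}"
  proof (cases "\<xi> \<le> \<eta>")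
    case True then show ?thesis using u m by force
  next
    case False
    then have "\<eta> \<le> \<xi>" by simp
    moreover have "u = {\<eta>,\<xi>}" using u by auto
    ultimately show ?thesis using S_swap[OF m] by force
  qed
next
  fix u assume "u \<in> (\<lambda>(\<xi>,\<eta>). {\<xi>,\<eta>}) ` {p \<in> S n. fst p \<le> snd p}"
  then show "u \<in> U n" unfolding U_def S_def by auto
qed

lemma twice_U: "2 * card (U n) \<le> B n + dd n"
proof -
  define Slt where "Slt = {p \<in> S n. fst p < snd p}"
  define Seq where "Seq = {p \<in> S n. fst p = snd p}"
  define Sgt where "Sgt = {p \<in> S n. snd p < fst p}"
  have fins: "finite Slt" "finite Seq" "finite Sgt" using S_fin by (auto simp: Slt_def Seq_def Sgt_def)
  have "Sgt = prod.swap ` Slt"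
    unfolding Sgt_def Slt_def by (auto simp: S_swap image_iff intro!: exI[of _ "prod.swap _"])
  then have cg: "card Sgt = card Slt" by (simp add: card_image)
  have "S n = Slt \<union> Seq \<union> Sgt" unfolding Slt_def Seq_def Sgt_def by auto
  moreover have d1: "Slt \<inter> Seq = {}" "(Slt \<union> Seq) \<inter> Sgt = {}"
    unfolding Slt_def Seq_def Sgt_def by auto
  ultimately have cS: "card (S n) = card Slt + card Seq + card Sgt"
    using fins by (simp add: card_Un_disjoint)
  have "Seq = (\<lambda>\<xi>. (\<xi>,\<xi>)) ` Dg n" unfolding Seq_def S_def Dg_def is_partition_def by auto
  then have ce: "card Seq = dd n" using Dg_card by (simp add: card_image inj_on_def)
  have "{p \<in> S n. fst p \<le> snd p} = Slt \<union> Seq" unfolding Slt_def Seq_def by auto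
  then have "card {p \<in> S n. fst p \<le> snd p} = card Slt + card Seq"
    using fins d1 by (simp add: card_Un_disjoint)
  moreover have "card (U n) \<le> card {p \<in> S n. fst p \<le> snd p}"
    unfolding U_eq by (rule card_image_le) (use S_fin in simp)
  ultimately show ?thesis using cS cg ce S_card by simp
qed

lemma Pcount_bound: "2 * Pcount n \<le> B n + 3 * dd n"
  using twice_U[of n] Pcount_eq[of n] Dg_card(1)[of n] by simp

lemma pp_vals: "pp 0 = 1" "pp 1 = 1" "pp 2 = 2" "pp 3 = 3" "pp 4 = 5" "pp 5 = 7" "pp 6 = 11" "pp 7 = 15"
  "pp 8 = 22" "pp 9 = 30" "pp 10 = 42" "pp 11 = 56" "pp 12 = 77" "pp 13 = 101" "pp 14 = 135" "pp 15 = 176" "pp 16 = 231"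
  by code_simp+
lemma pp_Suc0: "pp (Suc 0) = 1" by code_simp
lemma B_list: "B n = sum_list (map (\<lambda>a. pp a * pp (n - a)) [0..<Suc n])"
proof -
  have e: "{..n} = set [0..<Suc n]" by auto
  show ?thesis unfolding B_def e by (rule sum_set_upt_conv_sum_list_nat)
qed
lemma B_4: "B 4 = 20"
proof -
  have e: "[0..<Suc 4] = [0,1,2,3,4]" by code_simp
  show ?thesis by (simp only: B_list e) (simp add: pp_vals pp_Suc0)
qed

lemma B_5: "B 5 = 36"
proof -
  have e: "[0..<Suc 5] = [0,1,2,3,4,5]" by code_simp
  show ?thesis by (simp only: B_list e) (simp add: pp_vals pp_Suc0)
qed

lemma B_6: "B 6 = 65"
proof -
  have e: "[0..<Suc 6] = [0,1,2,3,4,5,6]" by code_simp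
  show ?thesis by (simp only: B_list e) (simp add: pp_vals pp_Suc0)
qed

lemma B_7: "B 7 = 110"
proof -
  have e: "[0..<Suc 7] = [0,1,2,3,4,5,6,7]" by code_simp
  show ?thesis by (simp only: B_list e) (simp add: pp_vals pp_Suc0)
qed

lemma B_8: "B 8 = 185"
proof -
  have e: "[0..<Suc 8] = [0,1,2,3,4,5,6,7,8]" by code_simp
  show ?thesis by (simp only: B_list e) (simp add: pp_vals pp_Suc0)
qed

lemma B_9: "B 9 = 300"
proof -
  have e: "[0..<Suc 9] = [0,1,2,3,4,5,6,7,8,9]" by code_simp
  show ?thesis by (simp only: B_list e) (simp add: pp_vals pp_Suc0)
qed

lemma B_10: "B 10 = 481"
proof -
  have e: "[0..<Suc 10] = [0,1,2,3,4,5,6,7,8,9,10]" by code_simp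
  show ?thesis by (simp only: B_list e) (simp add: pp_vals pp_Suc0)
qed

lemma B_11: "B 11 = 752"
proof -
  have e: "[0..<Suc 11] = [0,1,2,3,4,5,6,7,8,9,10,11]" by code_simp
  show ?thesis by (simp only: B_list e) (simp add: pp_vals pp_Suc0)
qed

lemma B_12: "B 12 = 1165"
proof -
  have e: "[0..<Suc 12] = [0,1,2,3,4,5,6,7,8,9,10,11,12]" by code_simp
  show ?thesis by (simp only: B_list e) (simp add: pp_vals pp_Suc0)
qed

lemma B_13: "B 13 = 1770"
proof -
  have e: "[0..<Suc 13] = [0,1,2,3,4,5,6,7,8,9,10,11,12,13]" by code_simp
  show ?thesis by (simp only: B_list e) (simp add: pp_vals pp_Suc0)
qed

lemma B_14: "B 14 = 2665"
proof -
  have e: "[0..<Suc 14] = [0,1,2,3,4,5,6,7,8,9,10,11,12,13,14]" by code_simp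
  show ?thesis by (simp only: B_list e) (simp add: pp_vals pp_Suc0)
qed

lemma B_15: "B 15 = 3956"
proof -
  have e: "[0..<Suc 15] = [0,1,2,3,4,5,6,7,8,9,10,11,12,13,14,15]" by code_simp
  show ?thesis by (simp only: B_list e) (simp add: pp_vals pp_Suc0)
qed

lemma B_16: "B 16 = 5822"
proof -
  have e: "[0..<Suc 16] = [0,1,2,3,4,5,6,7,8,9,10,11,12,13,14,15,16]" by code_simp
  show ?thesis by (simp only: B_list e) (simp add: pp_vals pp_Suc0)
qed


lemma pp01: "pp 0 = 1" "pp 1 = 1" using P_1k[of 1] by (simp_all add: pp_def)

lemma B_rec: "B (Suc (Suc m)) \<le> B (Suc m) + B m + pp (Suc (Suc m))"
proof -
  have "B (Suc (Suc m)) = pp 0 * pp (Suc (Suc m)) + pp 1 * pp (Suc m) + (\<Sum>a\<le>m. pp (Suc (Suc a)) * pp (m - a))"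
    unfolding B_def sum.atMost_Suc_shift by simp
  also have "(\<Sum>a\<le>m. pp (Suc (Suc a)) * pp (m - a)) \<le> (\<Sum>a\<le>m. (pp (Suc a) + pp a) * pp (m - a))"
    by (rule sum_mono) (use pp_rec[of "Suc (Suc _)"] in simp)
  also have "\<dots> = (\<Sum>a\<le>m. pp (Suc a) * pp (Suc m - Suc a)) + B m"
    by (simp add: B_def sum.distrib algebra_simps)
  also have "(\<Sum>a\<le>m. pp (Suc a) * pp (Suc m - Suc a)) = B (Suc m) - pp (Suc m)"
    unfolding B_def sum.atMost_Suc_shift by (simp add: pp01)
  finally have *: "B (Suc (Suc m)) \<le> pp (Suc (Suc m)) + pp (Suc m) + (B (Suc m) - pp (Suc m) + B m)"
    using pp01 by simp
  have "pp 0 * pp (Suc m - 0) \<le> (\<Sum>a\<le>Suc m. pp a * pp (Suc m - a))" by (rule member_le_sum) auto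
  then have "pp (Suc m) \<le> B (Suc m)" using pp01 by (simp add: B_def)
  then show ?thesis using * by linarith
qed

lemma B_mono: "B m \<le> B (Suc m)"
proof -
  have "B m = (\<Sum>a\<le>m. pp a * pp (m - a))" by (simp add: B_def)
  also have "\<dots> \<le> (\<Sum>a\<le>m. pp a * pp (Suc m - a))"
    by (rule sum_mono) (simp add: Suc_diff_le pp_mono_Suc)
  also have "\<dots> \<le> B (Suc m)" unfolding B_def by simp
  finally show ?thesis .
qed

lemma D_step: "4 \<le> m \<Longrightarrow> Dbound (Suc (Suc m)) = 3 * Dbound m"
proof -
  assume m: "4 \<le> m"
  have "(Suc (Suc m) - 4) div 2 = Suc ((m - 4) div 2)" using m by simp
  moreover have "4 < m \<Longrightarrow> (Suc (Suc m) - 5) div 2 = Suc ((m - 5) div 2)" by simp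
  moreover have "odd m \<Longrightarrow> 5 \<le> m" using m by (cases "m = 4") auto
  ultimately show ?thesis using m unfolding Dbound_def by (auto simp: le_less)
qed

lemma base: "B 15 + 8 * (pp 15 + pp 14) \<le> Dbound 15" "B 16 + 8 * (pp 16 + pp 15) \<le> Dbound 16"
  by (simp_all add: B_15 B_16 pp_vals Dbound_def)

lemma big: "15 \<le> n \<Longrightarrow> B n + 8 * (pp n + pp (n - 1)) \<le> Dbound n"
proof (induction n rule: less_induct)
  case (less n)
  show ?case
  proof (cases "n \<le> 16")
    case True
    then have "n = 15 \<or> n = 16" using less.prems by auto
    then show ?thesis using base by auto
  next
    case False
    define m where "m = n - 2"
    have n: "n = Suc (Suc m)" and m: "15 \<le> m" using False less.prems by (simp_all add: m_def)
    have IH: "B m + 8 * (pp m + pp (m - 1)) \<le> Dbound m" using less.IH[of m] n m by simp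
    define j where "j = m - 2"
    have j: "m = Suc (Suc j)" using m by (simp add: j_def)
    have r1: "B n \<le> B (Suc m) + B m + pp n" using B_rec n by simp
    have r2: "B (Suc m) \<le> B m + B (m - 1) + pp (Suc m)" using B_rec[of "m - 1"] j by simp
    have r3: "B (m - 1) \<le> B m" using B_mono[of "m - 1"] j by simp
    have p1: "pp n \<le> pp (Suc m) + pp m" using pp_rec[of n] n by simp
    have p2: "pp (Suc m) \<le> pp m + pp (m - 1)" using pp_rec[of "Suc m"] j by simp
    have p3: "pp m \<le> pp (m - 1) + pp (m - 2)" using pp_rec[of m] j by simp
    have p4: "pp (m - 2) \<le> pp (m - 1)" using pp_mono[of "m - 2" "m - 1"] by simp
    have D: "Dbound n = 3 * Dbound m" using D_step[of m] n m by simp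
    have "n - 1 = Suc m" using n by simp
    then show ?thesis using r1 r2 r3 p1 p2 p3 p4 D IH by simp
  qed
qed

lemma small: "4 \<le> n \<Longrightarrow> n \<le> 14 \<Longrightarrow> B n + 3 * dd n < 2 * Dbound n"
proof -
  assume "4 \<le> n" "n \<le> 14"
  then have "n \<in> set [4..<15]" by (simp only: set_upt atLeastLessThan_iff) simp
  moreover have "[4..<15] = [4,5,6,7,8,9,10,11,12,13,14::nat]" by code_simp
  moreover have "\<forall>n\<in>set [4,5,6,7,8,9,10,11,12,13,14::nat]. B n + 3 * dd n < 2 * Dbound n"
    by (simp add: B_4 B_5 B_6 B_7 B_8 B_9 B_10 B_11 B_12 B_13 B_14 pp_vals dd_def Dbound_def)
  ultimately show ?thesis by metis
qed

theorem mainTheorem12: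
  fixes n :: nat
  assumes "n \<ge> 4"
  shows "Dbound n > Pcount n"
proof (cases "n \<le> 14")
  case True
  then show ?thesis using small[OF assms True] Pcount_bound[of n] by simp
next
  case False
  have "dd n \<le> pp n" unfolding dd_def using pp_mono[of "n div 2" n] by simp
  moreover have "Dbound n > 0" by (simp add: Dbound_def)
  ultimately show ?thesis using big[of n] False Pcount_bound[of n] by simp
qed

end
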